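(* Let $(\Omega,+)$ be a group, $a,b$ subgroups, and $x,y,z\subseteq\Omega$ with $x\top b$, $y\top b$, $z\top b$, $a\top x$, $a\top y$. Write $x=G_X$ and $z=G_Z$ as left graphs with respect to the decomposition $\Omega\cong y\times b$, i.e. $G_X=\{\eta+X(\eta):\eta\in y\}$, $G_Z=\{\eta+Z(\eta):\eta\in y\}$ with (unique) maps $X,Z:y\to b$. Then $\Gamma(G_X,a,y,b,G_Z)=G_{X+Z\circ\mathrm{B}^{a,x,b}_y}$, i.e. $\Gamma(x,a,y,b,z)$ is the left graph of the map $y\to b$, $\eta\mapsto X(\eta)+Z(\mathrm{B}^{a,x,b}_y(\eta))$.
   Context: $(\Omega,+)$ is a group written additively but not necessarily abelian. For subsets $u,v$, $u\top v$ means every $\omega$ has a unique decomposition $\omega=\mu+\nu$ with $\mu\in u,\nu\in v$; then $P^u_v(\omega):=\nu$ and $\check P^v_u(\omega):=\mu$. The canonical kernel is $\mathrm{B}^{a,x,b}_y:y\to y$, $\eta\mapsto P^a_y(\check P^b_x(\eta))$. $\Gamma(x,a,y,b,z)=\{\omega:\exists\alpha\in a,\beta\in b:\ \alpha+\omega+\beta\in y,\ \alpha+\omega\in z,\ \omega+\beta\in x\}$. *)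

theory Defs
  imports Main
begin

definition is_subgroup :: "'a::group_add set \<Rightarrow> bool" where
  "is_subgroup a \<longleftrightarrow> 0 \<in> a \<and> (\<forall>x\<in>a. \<forall>y\<in>a. x + y \<in> a) \<and> (\<forall>x\<in>a. - x \<in> a)"

definition transversal :: "'a::group_add set \<Rightarrow> 'a set \<Rightarrow> bool" (infix "\<top>" 50) where
  "u \<top> v \<longleftrightarrow> (\<forall>\<omega>. \<exists>!p. fst p \<in> u \<and> snd p \<in> v \<and> \<omega> = fst p + snd p)"

definition Proj :: "'a::group_add set \<Rightarrow> 'a set \<Rightarrow> 'a \<Rightarrow> 'a" where
  "Proj u v \<omega> = snd (THE p. fst p \<in> u \<and> snd p \<in> v \<and> \<omega> = fst p + snd p)"

text \<open>check P^v_u(omega) = mu (the u-component of the decomposition for u \<top> v).\<close>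
definition Projc :: "'a::group_add set \<Rightarrow> 'a set \<Rightarrow> 'a \<Rightarrow> 'a" where
  "Projc v u \<omega> = fst (THE p. fst p \<in> u \<and> snd p \<in> v \<and> \<omega> = fst p + snd p)"

definition Bker :: "'a::group_add set \<Rightarrow> 'a set \<Rightarrow> 'a set \<Rightarrow> 'a set \<Rightarrow> 'a \<Rightarrow> 'a" where
  "Bker a x b y \<eta> = Proj a y (Projc b x \<eta>)"

definition Gam :: "'a::group_add set \<Rightarrow> 'a set \<Rightarrow> 'a set \<Rightarrow> 'a set \<Rightarrow> 'a set \<Rightarrow> 'a set" where
  "Gam x a y b z = {\<omega>. \<exists>\<alpha>\<in>a. \<exists>\<beta>\<in>b. \<alpha> + \<omega> + \<beta> \<in> y \<and> \<alpha> + \<omega> \<in> z \<and> \<omega> + \<beta> \<in> x}"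

definition left_graph :: "'a::group_add set \<Rightarrow> ('a \<Rightarrow> 'a) \<Rightarrow> 'a set" where
  "left_graph y F = {\<eta> + F \<eta> | \<eta>. \<eta> \<in> y}"

end

theory Submission
  imports Defs
begin

lemma tv_unique:
  assumes "u \<top> v" "m \<in> u" "n \<in> v" "m' \<in> u" "n' \<in> v" "m + n = m' + n'"
  shows "m = m' \<and> n = n'"
proof -
  from assms(1) have "\<exists>!p. fst p \<in> u \<and> snd p \<in> v \<and> m + n = fst p + snd p"
    unfolding transversal_def by blast
  then have "(m, n) = (m', n')" using assms by (metis fst_conv snd_conv)
  then show ?thesis by simp
qed

lemma the_pair:
  assumes "u \<top> v" "m \<in> u" "n \<in> v"
  shows "(THE p. fst p \<in> u \<and> snd p \<in> v \<and> m + n = fst p + snd p) = (m, n)"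
proof (rule the_equality)
  show "fst (m, n) \<in> u \<and> snd (m, n) \<in> v \<and> m + n = fst (m, n) + snd (m, n)" using assms by simp
next
  fix p assume "fst p \<in> u \<and> snd p \<in> v \<and> m + n = fst p + snd p"
  then show "p = (m, n)" using tv_unique[OF assms(1) assms(2,3), of "fst p" "snd p"]
    by (metis prod.collapse)
qed

lemma Proj_eq: "u \<top> v \<Longrightarrow> m \<in> u \<Longrightarrow> n \<in> v \<Longrightarrow> Proj u v (m + n) = n"
  unfolding Proj_def by (simp add: the_pair)

lemma Projc_eq: "u \<top> v \<Longrightarrow> m \<in> u \<Longrightarrow> n \<in> v \<Longrightarrow> Projc v u (m + n) = m"
  unfolding Projc_def by (simp add: the_pair)

theorem theorem8p1:
  fixes a b x y z :: "'a::group_add set" and X Z :: "'a \<Rightarrow> 'a"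
  assumes "is_subgroup a" and "is_subgroup b"
    and "x \<top> b" and "y \<top> b" and "z \<top> b" and "a \<top> x" and "a \<top> y"
    and "\<forall>\<eta>\<in>y. X \<eta> \<in> b" and "\<forall>\<eta>\<in>y. Z \<eta> \<in> b"
    and "x = left_graph y X" and "z = left_graph y Z"
  shows "Gam x a y b z = left_graph y (\<lambda>\<eta>. X \<eta> + Z (Bker a x b y \<eta>))"
proof
  have b0: "0 \<in> b" and bn: "\<And>u. u \<in> b \<Longrightarrow> - u \<in> b" and bp: "\<And>u v. u \<in> b \<Longrightarrow> v \<in> b \<Longrightarrow> u + v \<in> b"
    using assms(2) unfolding is_subgroup_def by auto
  have an: "\<And>u. u \<in> a \<Longrightarrow> - u \<in> a" using assms(1) unfolding is_subgroup_def by auto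
  have Beq: "Bker a x b y \<eta> = \<zeta>" if "\<eta> \<in> y" "\<zeta> \<in> y" "\<alpha> \<in> a" "\<eta> + X \<eta> = \<alpha> + \<zeta>" for \<eta> \<zeta> \<alpha>
  proof -
    have mx: "\<eta> + X \<eta> \<in> x" using that assms(10) unfolding left_graph_def by auto
    have "\<eta> = (\<eta> + X \<eta>) + (- X \<eta>)" by (simp add: add.assoc)
    then have "Projc b x \<eta> = \<eta> + X \<eta>"
      using Projc_eq[OF assms(3) mx bn] assms(8) that(1) by metis
    then show ?thesis unfolding Bker_def using that Proj_eq[OF assms(7)] by simp
  qed
  show "Gam x a y b z \<subseteq> left_graph y (\<lambda>\<eta>. X \<eta> + Z (Bker a x b y \<eta>))"
  proof
    fix \<omega> assume "\<omega> \<in> Gam x a y b z"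
    then obtain \<alpha> \<beta> where al: "\<alpha> \<in> a" and be: "\<beta> \<in> b" and h1: "\<alpha> + \<omega> + \<beta> \<in> y"
      and h2: "\<alpha> + \<omega> \<in> z" and h3: "\<omega> + \<beta> \<in> x" unfolding Gam_def by auto
    from h2 assms(11) obtain \<zeta> where ze: "\<zeta> \<in> y" and zeq: "\<alpha> + \<omega> = \<zeta> + Z \<zeta>"
      unfolding left_graph_def by auto
    have "\<zeta> + (Z \<zeta> + \<beta>) = (\<alpha> + \<omega> + \<beta>) + 0" using zeq by (simp add: add.assoc)
    then have "\<zeta> = \<alpha> + \<omega> + \<beta> \<and> Z \<zeta> + \<beta> = 0"
      using tv_unique[OF assms(4) ze bp[OF _ be] h1 b0] assms(9) ze by blast
    then have e1: "\<zeta> = \<alpha> + \<omega> + \<beta>" and e0: "Z \<zeta> + \<beta> = 0" by auto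
    have e2: "\<beta> = - Z \<zeta>" using e0 by (metis add_0_right add_minus_cancel)
    from h3 assms(10) obtain \<eta> where et: "\<eta> \<in> y" and eeq: "\<omega> + \<beta> = \<eta> + X \<eta>"
      unfolding left_graph_def by auto
    have "\<eta> + X \<eta> = - \<alpha> + \<zeta>" using e1 eeq by (simp add: add.assoc)
    then have "Bker a x b y \<eta> = \<zeta>" using Beq[OF et ze an[OF al]] by simp
    moreover have "\<omega> = \<eta> + X \<eta> + Z \<zeta>"
    proof -
      have "\<omega> = (\<omega> + \<beta>) + Z \<zeta>" by (simp add: e2 add.assoc)
      then show ?thesis using eeq by simp
    qed
    ultimately show "\<omega> \<in> left_graph y (\<lambda>\<eta>. X \<eta> + Z (Bker a x b y \<eta>))"
      unfolding left_graph_def using et by (auto simp: add.assoc)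
  qed
  show "left_graph y (\<lambda>\<eta>. X \<eta> + Z (Bker a x b y \<eta>)) \<subseteq> Gam x a y b z"
  proof
    fix \<omega> assume "\<omega> \<in> left_graph y (\<lambda>\<eta>. X \<eta> + Z (Bker a x b y \<eta>))"
    then obtain \<eta> where et: "\<eta> \<in> y" and weq: "\<omega> = \<eta> + (X \<eta> + Z (Bker a x b y \<eta>))"
      unfolding left_graph_def by auto
    obtain p where p: "fst p \<in> a" "snd p \<in> y" "\<eta> + X \<eta> = fst p + snd p"
      using assms(7) unfolding transversal_def by blast
    define \<alpha> where "\<alpha> = fst p"
    define \<zeta> where "\<zeta> = snd p"
    have al: "\<alpha> \<in> a" and ze: "\<zeta> \<in> y" and meq: "\<eta> + X \<eta> = \<alpha> + \<zeta>" using p \<alpha>_def \<zeta>_def by auto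
    have B: "Bker a x b y \<eta> = \<zeta>" using Beq[OF et ze al meq] .
    have w: "\<omega> = \<alpha> + \<zeta> + Z \<zeta>" using weq meq B by (metis add.assoc)
    have Zb: "Z \<zeta> \<in> b" using assms(9) ze by auto
    have "- \<alpha> + \<omega> = \<zeta> + Z \<zeta>" using w by (simp add: add.assoc)
    then have c2: "- \<alpha> + \<omega> \<in> z" using assms(11) ze unfolding left_graph_def by auto
    have c1: "- \<alpha> + \<omega> + - Z \<zeta> \<in> y" using w ze by (simp add: add.assoc)
    have "\<omega> + - Z \<zeta> = \<eta> + X \<eta>" using w meq by (simp add: add.assoc[symmetric])
    then have c3: "\<omega> + - Z \<zeta> \<in> x" using assms(10) et unfolding left_graph_def by auto
    show "\<omega> \<in> Gam x a y b z" unfolding Gam_def using an[OF al] bn[OF Zb] c1 c2 c3 by blast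
  qed
qed

end
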